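(* Let $q,q^\dagger\in[1,2]$ and let $s^\dagger,s'$ be real numbers with $s'<s^\dagger-\left(\frac{d}{q^\dagger}-\frac dq\right)_+$, where $x_+=\max\{x,0\}$. Then $B^{s^\dagger,q^\dagger\wedge q,q}(\mathcal Z)$ is continuously embedded in $B^{s',q}(\mathcal Z)$, where $q^\dagger\wedge q=\min\{q^\dagger,q\}$.
   Context: Let $d\ge1$, $\mathcal X\subset\mathbb R^d$ with a fixed basis $\{\phi_\ell\}_{\ell\ge1}$, $\mathcal T\subset[0,T]$ bounded, $\mathcal Z=\mathcal X\times\mathcal T$. Functions on $\mathcal Z$ are identified with sequences of temporal functions via $u(\mathbf x,t)=\sum_{\ell}u_\ell(t)\phi_\ell(\mathbf x)$. For $p\ge1$, $\|u_\ell\|_p$ denotes the $L^p(\mathcal T)$-norm of the temporal coefficient function. For $r,p\ge1$ and $s\in\mathbb R$, let $\tau_r(s)=\frac sd+\frac12-\frac1r$, $\|u\|_{s,r,p}=\big(\sum_\ell \ell^{\tau_r(s)r}\|u_\ell\|_p^r\big)^{1/r}$, $B^{s,r,p}(\mathcal Z)=\{u:\|u\|_{s,r,p}<\infty\}$, and $B^{s,q}(\mathcal Z):=B^{s,q,q}(\mathcal Z)$. *)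

theory Defs
  imports "HOL-Analysis.Analysis"
begin

text \<open>A function u on Z = X x T is identified with the sequence of its temporal
coefficient functions u l, l >= 1 (the value u 0 is irrelevant).\<close>

definition in_Lp :: "real set \<Rightarrow> real \<Rightarrow> (real \<Rightarrow> real) \<Rightarrow> bool" where
  "in_Lp Tset p f \<longleftrightarrow> set_borel_measurable lborel Tset f \<and>
     set_integrable lborel Tset (\<lambda>t. \<bar>f t\<bar> powr p)"

definition Lp_norm :: "real set \<Rightarrow> real \<Rightarrow> (real \<Rightarrow> real) \<Rightarrow> real" where
  "Lp_norm Tset p f = (LINT t:Tset|lborel. \<bar>f t\<bar> powr p) powr (1 / p)"

definition tau :: "nat \<Rightarrow> real \<Rightarrow> real \<Rightarrow> real" where
  "tau d r s = s / real d + 1/2 - 1 / r"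

definition besov_terms :: "nat \<Rightarrow> real set \<Rightarrow> real \<Rightarrow> real \<Rightarrow> real \<Rightarrow> (nat \<Rightarrow> real \<Rightarrow> real) \<Rightarrow> nat \<Rightarrow> real" where
  "besov_terms d Tset s r p u k =
     real (Suc k) powr (tau d r s * r) * (Lp_norm Tset p (u (Suc k))) powr r"

definition besov_norm :: "nat \<Rightarrow> real set \<Rightarrow> real \<Rightarrow> real \<Rightarrow> real \<Rightarrow> (nat \<Rightarrow> real \<Rightarrow> real) \<Rightarrow> real" where
  "besov_norm d Tset s r p u = (\<Sum>k. besov_terms d Tset s r p u k) powr (1 / r)"

definition besov :: "nat \<Rightarrow> real set \<Rightarrow> real \<Rightarrow> real \<Rightarrow> real \<Rightarrow> (nat \<Rightarrow> real \<Rightarrow> real) set" where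
  "besov d Tset s r p = {u. (\<forall>l\<ge>1. in_Lp Tset p (u l)) \<and> summable (besov_terms d Tset s r p u)}"

definition cont_embedded :: "'a set \<Rightarrow> ('a \<Rightarrow> real) \<Rightarrow> 'a set \<Rightarrow> ('a \<Rightarrow> real) \<Rightarrow> bool" where
  "cont_embedded A nA B nB \<longleftrightarrow> A \<subseteq> B \<and> (\<exists>C>0. \<forall>u\<in>A. nB u \<le> C * nA u)"

end

theory Submission
  imports Defs
begin

lemma Lp_norm_nonneg: "Lp_norm T p f \<ge> 0"
  by (simp add: Lp_norm_def)

lemma tau_le:
  fixes d :: nat and q qd sd s' :: real
  assumes "d \<ge> 1" "q \<in> {1..2}" "qd \<in> {1..2}"
    and "s' < sd - max (real d / qd - real d / q) 0"
  shows "tau d q s' \<le> tau d (min qd q) sd"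
proof -
  have dpos: "real d > 0" using assms(1) by simp
  show ?thesis
  proof (cases "qd \<le> q")
    case True
    then have m: "min qd q = qd" by simp
    have "s' < sd - real d / qd + real d / q" using assms(4) by simp
    then have "s' / real d < (sd - real d / qd + real d / q) / real d"
      using dpos by (simp add: divide_strict_right_mono)
    also have "\<dots> = sd / real d - 1/qd + 1/q" using dpos by (simp add: field_simps)
    finally show ?thesis unfolding tau_def m by simp
  next
    case False
    then have m: "min qd q = q" by simp
    have "s' < sd" using assms(4) by simp
    then have "s' / real d \<le> sd / real d" using dpos by (simp add: divide_right_mono)
    then show ?thesis unfolding tau_def m by simp
  qed
qed

theorem proposition4p1:
  fixes d :: nat and Tset :: "real set" and Tmax q qd sd s' :: real
  assumes "d \<ge> 1"
    and "Tset \<subseteq> {0..Tmax}" and "Tset \<in> sets lborel"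
    and "q \<in> {1..2}" and "qd \<in> {1..2}"
    and "s' < sd - max (real d / qd - real d / q) 0"
  shows "cont_embedded
           (besov d Tset sd (min qd q) q) (besov_norm d Tset sd (min qd q) q)
           (besov d Tset s' q q) (besov_norm d Tset s' q q)"
proof -
  define r where "r = min qd q"
  have r1: "r \<ge> 1" and rq: "r \<le> q" and q1: "q \<ge> 1"
    using assms(4,5) by (auto simp: r_def)
  have tle: "tau d q s' \<le> tau d r sd" using tau_le[OF assms(1,4,5,6)] by (simp add: r_def)
  have key: "summable (besov_terms d Tset s' q q u) \<and>
      besov_norm d Tset s' q q u \<le> besov_norm d Tset sd r q u"
    if su: "summable (besov_terms d Tset sd r q u)" for u
  proof -
    define a where "a = besov_terms d Tset sd r q u"
    define b where "b = besov_terms d Tset s' q q u"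
    define S where "S = suminf a"
    define x where "x k = real (Suc k) powr tau d r sd * Lp_norm Tset q (u (Suc k))" for k
    have x0: "x k \<ge> 0" for k by (simp add: x_def Lp_norm_nonneg)
    have ax: "a k = x k powr r" for k
      unfolding a_def besov_terms_def x_def
      by (simp add: powr_mult Lp_norm_nonneg powr_powr)
    have a0: "a k \<ge> 0" for k by (simp add: ax)
    have sa: "summable a" using su by (simp add: a_def)
    have aS: "a k \<le> S" for k unfolding S_def
      using sum_le_suminf[OF sa, of "{k}"] a0 by simp
    have S0: "S \<ge> 0" using aS a0 order_trans by blast
    have bx: "b k \<le> x k powr q" for k
    proof -
      have "real (Suc k) powr (tau d q s' * q) \<le> real (Suc k) powr (tau d r sd * q)"
        using tle q1 by (intro powr_mono) (auto intro: mult_right_mono)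
      then have "b k \<le> real (Suc k) powr (tau d r sd * q) * Lp_norm Tset q (u (Suc k)) powr q"
        unfolding b_def besov_terms_def by (intro mult_right_mono) auto
      also have "\<dots> = x k powr q"
        unfolding x_def by (simp add: powr_mult Lp_norm_nonneg powr_powr)
      finally show ?thesis .
    qed
    define c where "c = S powr ((q - r) / r)"
    have bc: "b k \<le> a k * c" for k
    proof (cases "x k = 0")
      case True
      then have "x k powr q = 0" by simp
      then show ?thesis using bx[of k] mult_nonneg_nonneg[OF a0[of k] powr_ge_zero[of S "(q - r) / r"]] unfolding c_def by linarith
    next
      case False
      then have xp: "x k > 0" using x0[of k] by simp
      have "x k powr q = x k powr r * x k powr (q - r)" by (simp add: powr_add[symmetric])
      also have "x k powr (q - r) = (x k powr r) powr ((q - r) / r)"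
        using r1 by (simp add: powr_powr)
      also have "\<dots> \<le> c" unfolding c_def using r1 rq aS[of k] ax[of k]
        by (intro powr_mono2) auto
      finally have "x k powr q \<le> a k * c" using ax[of k]
        by (metis mult_left_mono powr_ge_zero order_trans eq_refl)
      then show ?thesis using bx[of k] by linarith
    qed
    have b0: "b k \<ge> 0" for k unfolding b_def besov_terms_def by simp
    have sb: "summable b"
      by (rule summable_comparison_test[of _ "\<lambda>k. a k * c"])
         (use bc b0 sa in \<open>auto intro: summable_mult2\<close>)
    have sumb: "suminf b \<le> S * c"
      unfolding S_def using suminf_le[OF bc sb summable_mult2[OF sa]] suminf_mult2[OF sa]
      by simp
    have "besov_norm d Tset s' q q u = suminf b powr (1/q)"
      by (simp add: besov_norm_def b_def)
    also have "\<dots> \<le> S powr (1/r)"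
    proof (cases "S = 0")
      case True
      then have "suminf b \<le> 0" using sumb by simp
      moreover have "suminf b \<ge> 0" using sb b0 suminf_nonneg by blast
      ultimately show ?thesis by simp
    next
      case False
      then have Sp: "S > 0" using S0 by simp
      have e: "1 + (q - r) / r = q / r" using r1 by (simp add: field_simps)
      have "S * c = S powr 1 * S powr ((q - r) / r)" using Sp by (simp add: c_def)
      also have "\<dots> = S powr (q / r)" by (simp only: powr_add[symmetric] e)
      finally have "S * c = S powr (q / r)" .
      then have "suminf b powr (1/q) \<le> (S powr (q/r)) powr (1/q)"
        using sumb q1 sb b0 suminf_nonneg by (intro powr_mono2) auto
      also have "\<dots> = S powr (1/r)" using q1 r1 by (simp add: powr_powr)
      finally show ?thesis .
    qed
    also have "\<dots> = besov_norm d Tset sd r q u"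
      by (simp add: besov_norm_def S_def a_def)
    finally show ?thesis using sb by (simp add: b_def)
  qed
  show ?thesis
    unfolding cont_embedded_def r_def[symmetric]
  proof (intro conjI exI[of _ 1])
    show "besov d Tset sd r q \<subseteq> besov d Tset s' q q"
      using key by (auto simp: besov_def)
    show "\<forall>u\<in>besov d Tset sd r q. besov_norm d Tset s' q q u \<le> 1 * besov_norm d Tset sd r q u"
      using key by (auto simp: besov_def)
  qed simp
qed

end
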